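(* For every $T\ge0$ and integers $0\le\ell\le k$, $a(k,T)-a(\ell,T)\le k-\ell$. In particular $a(k+1,T)\le a(k,T)+1$.
   Context: Let $\lambda>0$ and let $N$ be a Poisson process with intensity $\lambda$, arrival times $0<\sigma_1<\sigma_2<\cdots$, and natural filtration $\mathcal F_t=\sigma(N_s:s\le t)$. Let $F:[0,\infty)\to[0,\infty)$ be strictly increasing and strictly convex with $F(0)=0$. For $k\in\{0,1,\dots\}$ let $\mathcal A_k$ be the set of $(\mathcal F_t)$-adapted, integer-valued, nonnegative, non-increasing processes $\xi$ with $\xi_0=k$ whose values change only at arrival times of $N$, and $v(k,T)=\inf_{\xi\in\mathcal A_k}\mathbb E[\sum_{i:\sigma_i\le T}F(\xi_{\sigma_i-}-\xi_{\sigma_i})+F(\xi_T)]$. For $k\in\mathbb N_+$, $a(k,T)$ is the smallest minimizer over $a\in\{1,\dots,k\}$ of $v(k-a,T)+F(a)$, and $a(0,T)=0$. *)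

theory Defs
  imports "HOL-Probability.Probability"
begin

definition strict_convex_on :: "real set \<Rightarrow> (real \<Rightarrow> real) \<Rightarrow> bool" where
  "strict_convex_on S f \<longleftrightarrow>
     (\<forall>x\<in>S. \<forall>y\<in>S. \<forall>t. x \<noteq> y \<and> 0 < t \<and> t < 1 \<longrightarrow>
        f (t * x + (1 - t) * y) < t * f x + (1 - t) * f y)"

text \<open>Poisson process built from interarrival times E 0, E 1, ...:
  the i-th arrival time (i \<ge> 1) is sigma_i = E 0 + ... + E (i-1).\<close>
definition arrival :: "(nat \<Rightarrow> 'a \<Rightarrow> real) \<Rightarrow> nat \<Rightarrow> 'a \<Rightarrow> real" where
  "arrival E i \<omega> = (\<Sum>j<i. E j \<omega>)"

definition count_proc :: "(nat \<Rightarrow> 'a \<Rightarrow> real) \<Rightarrow> real \<Rightarrow> 'a \<Rightarrow> nat" where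
  "count_proc E t \<omega> = card {i. 1 \<le> i \<and> arrival E i \<omega> \<le> t}"

definition poisson_interarrivals :: "'a measure \<Rightarrow> real \<Rightarrow> (nat \<Rightarrow> 'a \<Rightarrow> real) \<Rightarrow> bool" where
  "poisson_interarrivals M lam E \<longleftrightarrow>
     prob_space M \<and> 0 < lam \<and>
     prob_space.indep_vars M (\<lambda>_. borel) E UNIV \<and>
     (\<forall>i. distributed M lborel (E i) (exponential_density lam))"

definition nat_filt :: "'a measure \<Rightarrow> (nat \<Rightarrow> 'a \<Rightarrow> real) \<Rightarrow> real \<Rightarrow> 'a measure" where
  "nat_filt M E t = sigma (space M)
     {count_proc E s -` A \<inter> space M | s A. 0 \<le> s \<and> s \<le> t}"

text \<open>Admissible strategies A_k: adapted, nat-valued (hence integer and nonnegative),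
  non-increasing, starting at k, and changing only at arrival times
  (no arrival in (s,t] implies xi_s = xi_t).\<close>
definition admissible :: "'a measure \<Rightarrow> (nat \<Rightarrow> 'a \<Rightarrow> real) \<Rightarrow> nat \<Rightarrow> (real \<Rightarrow> 'a \<Rightarrow> nat) set" where
  "admissible M E k = {\<xi>.
     (\<forall>t\<ge>0. \<xi> t \<in> measurable (nat_filt M E t) (count_space UNIV)) \<and>
     (\<forall>\<omega>\<in>space M. \<xi> 0 \<omega> = k) \<and>
     (\<forall>\<omega>\<in>space M. \<forall>s t. 0 \<le> s \<and> s \<le> t \<longrightarrow> \<xi> t \<omega> \<le> \<xi> s \<omega>) \<and>
     (\<forall>\<omega>\<in>space M. \<forall>s t. 0 \<le> s \<and> s \<le> t \<and> count_proc E s \<omega> = count_proc E t \<omega>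
          \<longrightarrow> \<xi> t \<omega> = \<xi> s \<omega>)}"

definition left_lim :: "(real \<Rightarrow> 'a \<Rightarrow> nat) \<Rightarrow> real \<Rightarrow> 'a \<Rightarrow> real" where
  "left_lim \<xi> t \<omega> = Lim (at_left t) (\<lambda>s. real (\<xi> s \<omega>))"

definition cost :: "(nat \<Rightarrow> 'a \<Rightarrow> real) \<Rightarrow> (real \<Rightarrow> real) \<Rightarrow> real \<Rightarrow> (real \<Rightarrow> 'a \<Rightarrow> nat) \<Rightarrow> 'a \<Rightarrow> ennreal" where
  "cost E F T \<xi> \<omega> =
     (\<Sum>i. if 1 \<le> i \<and> arrival E i \<omega> \<le> T
           then ennreal (F (left_lim \<xi> (arrival E i \<omega>) \<omega> - real (\<xi> (arrival E i \<omega>) \<omega>)))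
           else 0)
     + ennreal (F (real (\<xi> T \<omega>)))"

definition value_fn :: "'a measure \<Rightarrow> (nat \<Rightarrow> 'a \<Rightarrow> real) \<Rightarrow> (real \<Rightarrow> real) \<Rightarrow> nat \<Rightarrow> real \<Rightarrow> ennreal" where
  "value_fn M E F k T = (INF \<xi> \<in> admissible M E k. \<integral>\<^sup>+ \<omega>. cost E F T \<xi> \<omega> \<partial>M)"

definition opt_a :: "'a measure \<Rightarrow> (nat \<Rightarrow> 'a \<Rightarrow> real) \<Rightarrow> (real \<Rightarrow> real) \<Rightarrow> nat \<Rightarrow> real \<Rightarrow> nat" where
  "opt_a M E F k T = (if k = 0 then 0 else
     (LEAST a. 1 \<le> a \<and> a \<le> k \<and>
        (\<forall>b. 1 \<le> b \<and> b \<le> k \<longrightarrow>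
           value_fn M E F (k - a) T + ennreal (F (real a))
             \<le> value_fn M E F (k - b) T + ennreal (F (real b)))))"

end

theory Submission
  imports Defs
begin

lemma conv_incr:
  fixes F :: "real \<Rightarrow> real"
  assumes sc: "strict_convex_on {0..} F"
  shows "F (real (x+d)) - F (real x) \<le> F (real (x+d+e)) - F (real (x+e))"
proof (cases "d = 0 \<or> e = 0")
  case True then show ?thesis by auto
next
  case False
  define t where "t = real e / real (d+e)"
  have t0: "0 < t" "t < 1" using False by (auto simp: t_def)
  have ne: "real x \<noteq> real (x+d+e)" using False by simp
  have "F (t * real x + (1-t) * real (x+d+e)) < t * F (real x) + (1-t) * F (real (x+d+e))"
    using sc ne t0 unfolding strict_convex_on_def by auto
  moreover have "t * real x + (1-t) * real (x+d+e) = real (x+d)"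
  proof -
    have "1 - t = real d / real (d+e)" using False by (simp add: t_def field_simps)
    hence "(1-t) * (real d + real e) = real d" using False by simp
    moreover have "t * real x + (1-t) * real (x+d+e) = real x + (1-t) * (real d + real e)"
      by (simp add: algebra_simps)
    ultimately show ?thesis by simp
  qed
  moreover have "F ((1-t) * real x + (1-(1-t)) * real (x+d+e)) < (1-t) * F (real x) + (1-(1-t)) * F (real (x+d+e))"
    using sc[unfolded strict_convex_on_def, rule_format, of "real x" "real (x+d+e)" "1-t"] ne t0 by simp
  moreover have "(1-t) * real x + (1-(1-t)) * real (x+d+e) = real (x+e)"
  proof -
    have "t * (real d + real e) = real e" using False by (simp add: t_def)
    moreover have "(1-t) * real x + (1-(1-t)) * real (x+d+e) = real x + t * (real d + real e)"
      by (simp add: algebra_simps)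
    ultimately show ?thesis by simp
  qed
  ultimately show ?thesis by (simp add: algebra_simps)
qed

definition Pk :: "(nat \<Rightarrow> real) \<Rightarrow> (real \<Rightarrow> real) \<Rightarrow> nat \<Rightarrow> nat \<Rightarrow> bool" where
  "Pk w F k a \<longleftrightarrow> 1 \<le> a \<and> a \<le> k \<and>
        (\<forall>b. 1 \<le> b \<and> b \<le> k \<longrightarrow> w (k - a) + F (real a) \<le> w (k - b) + F (real b))"

lemma Pk_ex:
  assumes "1 \<le> k" shows "\<exists>a. Pk w F k a"
proof -
  have "finite {1..k}" "{1..k} \<noteq> {}" using assms by auto
  define f where "f b = w (k - b) + F (real b)" for b
  define m where "m = Min (f ` {1..k})"
  have "m \<in> f ` {1..k}" unfolding m_def using assms by (intro Min_in) auto
  then obtain a where a: "a \<in> {1..k}" "f a = m" by auto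
  have "\<forall>b\<in>{1..k}. f a \<le> f b" using a unfolding m_def by auto
  then have "a \<in> {1..k}" "\<forall>b\<in>{1..k}. w (k - a) + F (real a) \<le> w (k - b) + F (real b)"
    using a unfolding f_def by auto
  then show ?thesis unfolding Pk_def by auto
qed

lemma Pk_least:
  assumes "1 \<le> k"
  shows "Pk w F k (LEAST a. Pk w F k a)" "\<And>a. a < (LEAST a. Pk w F k a) \<Longrightarrow> \<not> Pk w F k a"
   apply (rule LeastI_ex, rule Pk_ex[OF assms])
  using not_less_Least by blast

lemma abstract_main:
  fixes w :: "nat \<Rightarrow> real" and F :: "real \<Rightarrow> real"
  assumes cv: "\<And>x d e. F (real (x+d)) - F (real x) \<le> F (real (x+d+e)) - F (real (x+e))"
    and l1: "1 \<le> l" and lk: "l \<le> k"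
  shows "int (LEAST a. Pk w F k a) - int (LEAST a. Pk w F l a) \<le> int k - int l"
proof (rule ccontr)
  define A where "A = (LEAST a. Pk w F k a)"
  define B where "B = (LEAST a. Pk w F l a)"
  assume "\<not> ?thesis"
  hence c: "int A - int B > int k - int l" by (simp add: A_def B_def)
  have k1: "1 \<le> k" using l1 lk by simp
  have PA: "Pk w F k A" using Pk_least(1)[OF k1] unfolding A_def .
  have nA: "\<And>a. a < A \<Longrightarrow> \<not> Pk w F k a"
    using Pk_least(2)[OF k1] unfolding A_def by blast
  have PB: "Pk w F l B" using Pk_least(1)[OF l1] unfolding B_def .
  have A1: "1 \<le> A" "A \<le> k" and B1: "1 \<le> B" "B \<le> l" using PA PB unfolding Pk_def by auto
  define b where "b = l + A - k"
  have b: "1 \<le> b" "b \<le> l" using c A1 B1 lk unfolding b_def by auto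
  have i1: "w (l - B) + F (real B) \<le> w (l - b) + F (real b)" using PB b unfolding Pk_def by auto
  define b' where "b' = k - l + B"
  have b': "1 \<le> b'" "b' \<le> k" "b' < A" using c A1 B1 lk unfolding b'_def by auto
  have "\<not> Pk w F k b'" using nA b' by blast
  hence "\<not> (\<forall>b. 1 \<le> b \<and> b \<le> k \<longrightarrow> w (k - b') + F (real b') \<le> w (k - b) + F (real b))"
    using b' unfolding Pk_def by blast
  then obtain bb where bb: "1 \<le> bb" "bb \<le> k" "w (k - b') + F (real b') > w (k - bb) + F (real bb)"
    by (auto simp: not_le)
  have "w (k - A) + F (real A) \<le> w (k - bb) + F (real bb)" using PA bb unfolding Pk_def by auto
  hence i2: "w (k - b') + F (real b') > w (k - A) + F (real A)" using bb by linarith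
  define x where "x = B"
  define d where "d = l + A - k - B"
  define e where "e = k - l"
  have eq1: "l - b = k - A" "k - b' = l - B" using c A1 B1 lk unfolding b_def b'_def by auto
  have r1: "real b = real (x + d)" "real B = real x" "real A = real (x+d+e)" "real b' = real (x+e)"
    using c A1 B1 lk unfolding x_def d_def e_def b_def b'_def by auto
  have cv': "F (real b) - F (real B) \<le> F (real A) - F (real b')"
    using cv[of x d e] unfolding r1[symmetric] .
  have i1': "w (l - B) + F (real B) \<le> w (k - A) + F (real b)" using i1 unfolding eq1 .
  have i2': "w (k - A) + F (real A) < w (l - B) + F (real b')" using i2 unfolding eq1 .
  show False using i1' i2' cv' by linarith
qed

lemma value_fin:
  assumes P: "prob_space M" and F0: "F 0 = 0"
  shows "value_fn M E F j T \<le> ennreal (F (real j))"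
proof -
  define \<xi> where "\<xi> = (\<lambda>(t::real) (\<omega>::'a). j)"
  have xi: "\<xi> t \<omega> = j" for t \<omega> unfolding \<xi>_def by simp
  have adm: "\<xi> \<in> admissible M E j" unfolding admissible_def \<xi>_def by auto
  have ll: "left_lim \<xi> t \<omega> = real j" for t \<omega>
    unfolding left_lim_def \<xi>_def
    by (rule tendsto_Lim) (auto simp: trivial_limit_at_left_real)
  have "cost E F T \<xi> \<omega> = ennreal (F (real j))" for \<omega>
  proof -
    have "(if 1 \<le> i \<and> arrival E i \<omega> \<le> T
           then ennreal (F (left_lim \<xi> (arrival E i \<omega>) \<omega> - real (\<xi> (arrival E i \<omega>) \<omega>)))
           else 0) = 0" for i
      unfolding ll xi by (simp add: F0)
    then show ?thesis unfolding cost_def by (simp add: xi)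
  qed
  hence "(\<integral>\<^sup>+ \<omega>. cost E F T \<xi> \<omega> \<partial>M) = ennreal (F (real j))"
    using prob_space.emeasure_space_1[OF P] by simp
  then show ?thesis unfolding value_fn_def using adm by (metis INF_lower)
qed

theorem corollary2p6:
  fixes M :: "'a measure" and lam :: real and E :: "nat \<Rightarrow> 'a \<Rightarrow> real"
    and F :: "real \<Rightarrow> real" and T :: real and k l :: nat
  assumes "poisson_interarrivals M lam E"
    and "F 0 = 0"
    and "\<forall>x\<ge>0. F x \<ge> 0"
    and "strict_mono_on {0..} F"
    and "strict_convex_on {0..} F"
    and "0 \<le> T"
    and "l \<le> k"
  shows "int (opt_a M E F k T) - int (opt_a M E F l T) \<le> int k - int l
    \<and> opt_a M E F (k + 1) T \<le> opt_a M E F k T + 1"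
proof -
  have P: "prob_space M" using assms(1) unfolding poisson_interarrivals_def by simp
  define w where "w j = enn2real (value_fn M E F j T)" for j
  have vw: "value_fn M E F j T = ennreal (w j)" for j
  proof -
    have "value_fn M E F j T \<noteq> top" using value_fin[of M F E j T, OF P assms(2)]
      by (metis ennreal_neq_top neq_top_trans)
    then show ?thesis unfolding w_def by (simp add: ennreal_enn2real less_top)
  qed
  have w0: "w j \<ge> 0" for j unfolding w_def by simp
  have F0: "F (real a) \<ge> 0" for a :: nat using assms(3) by simp
  have eqv: "opt_a M E F k T = (if k = 0 then 0 else (LEAST a. Pk w F k a))" for k
  proof -
    have "(value_fn M E F (k - a) T + ennreal (F (real a)) \<le> value_fn M E F (k - b) T + ennreal (F (real b)))
        = (w (k - a) + F (real a) \<le> w (k - b) + F (real b))" for a b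
      unfolding vw using w0 F0
      by (simp add: ennreal_plus[symmetric] ennreal_le_iff del: ennreal_plus)
    then show ?thesis unfolding opt_a_def Pk_def by simp
  qed
  have cv: "\<And>x d e. F (real (x+d)) - F (real x) \<le> F (real (x+d+e)) - F (real (x+e))"
    using conv_incr[OF assms(5)] by blast
  have gen: "int (opt_a M E F k T) - int (opt_a M E F l T) \<le> int k - int l" if "l \<le> k" for k l
  proof (cases "l = 0")
    case True
    show ?thesis
    proof (cases "k = 0")
      case False
      then have "Pk w F k (LEAST a. Pk w F k a)" using Pk_least(1)[of k w F] by simp
      then have "(LEAST a. Pk w F k a) \<le> k" unfolding Pk_def by blast
      then show ?thesis using True False by (simp add: eqv)
    qed (use True in \<open>simp add: eqv\<close>)
  next
    case False
    have "1 \<le> l" "k \<noteq> 0" using False that by auto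
    then show ?thesis using abstract_main[OF cv _ that, of w] by (simp add: eqv)
  qed
  show ?thesis using gen[OF assms(7)] gen[of k "k+1"] by simp
qed

end
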